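(* Let $r \in \mathbb{Z}_{\geqslant 2}$. For any real $x \geqslant 1$, \begin{align*} \sum_{1 \leqslant n_1 < \dotsb < n_r \leqslant x} \mu \left( n_1 \dotsb n_r \right) \left \lfloor \frac{x}{n_1 \dotsb n_r} \right \rfloor &= \frac{1}{r!} \sum_{n_1 ,\dotsc ,n_r \leqslant x} \mu \left( n_1 \dotsb n_r \right) \left \lfloor \frac{x}{n_1 \dotsb n_r} \right \rfloor \\ &\quad - \frac{1}{r!}\sum_{j=2}^{r-2} (-1)^j (j-1) \binom{r}{j} \sum_{n \leqslant x} (1-r+j)^{\omega(n)} - \frac{(-1)^r \lfloor x \rfloor}{r(r-2)!} + \frac{(-1)^{r}(r-2)}{(r-1)!}. \end{align*}
   Context: $\mu$ is the Möbius function, $\lfloor\cdot\rfloor$ the integer part, and $\omega(n)$ the number of distinct prime factors of $n$. The first sum on the right runs over all $r$-tuples of positive integers at most $x$; an empty sum (e.g. over $j$ when $r<4$) is $0$. *)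

theory Defs
  imports "HOL-Analysis.Analysis" "HOL-Computational_Algebra.Squarefree"
begin

definition moebius_mu :: "nat \<Rightarrow> int" where
  "moebius_mu n = (if n = 0 \<or> \<not> squarefree n then 0 else (-1) ^ card (prime_factors n))"

definition omega :: "nat \<Rightarrow> nat" where
  "omega n = card (prime_factors n)"

end

theory Submission
  imports Defs "HOL-Combinatorics.Permutations"
begin


lemma sum_pow_card:
  fixes h :: "nat \<Rightarrow> real"
  assumes "finite S"
  shows "(\<Sum>J\<in>Pow S. h (card J)) = (\<Sum>j\<le>card S. real (card S choose j) * h j)"
proof -
  have "(\<Sum>J\<in>Pow S. h (card J)) = (\<Sum>j\<in>{..card S}. \<Sum>J\<in>{J. J \<in> Pow S \<and> card J = j}. h (card J))"
    by (rule sum.group[symmetric]) (use assms in \<open>auto simp: card_mono\<close>)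
  also have "\<dots> = (\<Sum>j\<le>card S. real (card S choose j) * h j)"
  proof (rule sum.cong[OF refl])
    fix j assume "j \<in> {..card S}"
    have e: "{J. J \<in> Pow S \<and> card J = j} = {B. B \<subseteq> S \<and> card B = j}" by auto
    have "(\<Sum>J\<in>{J. J \<in> Pow S \<and> card J = j}. h (card J)) = (\<Sum>J\<in>{J. J \<in> Pow S \<and> card J = j}. h j)"
      by (rule sum.cong) auto
    also have "\<dots> = real (card S choose j) * h j"
      using n_subsets[OF assms, of j] e by simp
    finally show "(\<Sum>J\<in>{J. J \<in> Pow S \<and> card J = j}. h (card J)) = real (card S choose j) * h j" .
  qed
  finally show ?thesis .
qed

lemma alt_indicator:
  assumes "finite M"
  shows "(\<Sum>J\<in>Pow M. (-1) ^ card J * (1 - real (card J))) = (if card M \<le> 1 then 1 else 0)"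
proof -
  have "(\<Sum>J\<in>Pow M. (-1) ^ card J * (1 - real (card J)))
     = (\<Sum>j\<le>card M. real (card M choose j) * ((-1) ^ j * (1 - real j)))"
    by (rule sum_pow_card[OF assms])
  also have "\<dots> = (\<Sum>j\<le>card M. (-1) ^ j * real (card M choose j))
                 - (\<Sum>j\<le>card M. (-1) ^ j * real j * real (card M choose j))"
    by (simp add: sum_subtractf[symmetric] algebra_simps)
  also have "\<dots> = (if card M \<le> 1 then 1 else 0)"
  proof (cases "card M \<le> 1")
    case True
    then have "card M = 0 \<or> card M = 1" by auto
    then show ?thesis by auto
  next
    case False
    then show ?thesis
      using choose_alternating_sum[of "card M", where 'a=real]
            choose_alternating_linear_sum[of "card M", where 'a=real] by simp
  qed
  finally show ?thesis .
qed

lemma sum_PiE_prod_const: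
  fixes h :: "nat \<Rightarrow> real"
  assumes "finite P" "finite B"
  shows "(\<Sum>g\<in>P \<rightarrow>\<^sub>E B. \<Prod>p\<in>P. h (g p)) = (\<Sum>b\<in>B. h b) ^ card P"
  using prod_sum_PiE[OF assms(1), of "\<lambda>_. B" "\<lambda>_ b. h b"] assms by simp

lemma prod_sign:
  assumes "finite P"
  shows "(\<Prod>p\<in>P. (if g p = (0::nat) then 1 else -1 :: real)) = (-1) ^ card {p\<in>P. g p \<noteq> 0}"
  using assms by (simp add: prod.If_cases Int_def conj_commute)

lemma primes_prime_factors:
  assumes "finite S" "\<forall>p\<in>S. prime (p::nat)"
  shows "prime_factors (\<Prod>S) = S"
proof -
  have "0 \<notin> id ` S" using assms(2) by auto
  then have "prime_factors (prod id S) = \<Union>((prime_factors \<circ> id) ` S)"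
    using prime_factors_prod[OF assms(1)] by blast
  also have "\<dots> = S" using assms(2) by (auto simp: prime_factorization_prime)
  finally show ?thesis by simp
qed

lemma primes_squarefree:
  assumes "finite S" "\<forall>p\<in>S. prime (p::nat)"
  shows "squarefree (\<Prod>S)"
  using assms by (intro squarefree_prod_coprime) (auto simp: primes_coprime squarefree_prime)

lemma primes_prod_pos:
  assumes "finite S" "\<forall>p\<in>S. prime (p::nat)"
  shows "(\<Prod>S) > 0"
  using assms by (simp add: prime_gt_0_nat prod_pos)

lemma primes_mu:
  assumes "finite S" "\<forall>p\<in>S. prime (p::nat)"
  shows "moebius_mu (\<Prod>S) = (-1) ^ card S"
  using primes_prime_factors[OF assms] primes_squarefree[OF assms] primes_prod_pos[OF assms]
  by (simp add: moebius_mu_def)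

lemma primes_dvd:
  assumes "finite S" "S \<subseteq> prime_factors (k::nat)"
  shows "(\<Prod>S) dvd k"
  using assms
proof (induction S rule: finite_induct)
  case empty then show ?case by simp
next
  case (insert p S)
  have cp: "coprime p (\<Prod>S)"
    using insert by (intro prod_coprime_right) (auto intro: primes_coprime simp: prime_factors_dvd)
  have "p dvd k" using insert by auto
  then show ?case using insert cp by (simp add: divides_mult)
qed

lemma squarefree_prod_pf:
  assumes "squarefree (d::nat)" "d > 0"
  shows "\<Prod>(prime_factors d) = d"
proof -
  have "(\<Prod>p \<in> prime_factors d. p ^ multiplicity p d) = d"
    using prod_prime_factors[of d] assms by simp
  moreover have "(\<Prod>p \<in> prime_factors d. p ^ multiplicity p d) = (\<Prod>p \<in> prime_factors d. p)"
    using assms squarefree_factorial_semiring'[of d] by (intro prod.cong) auto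
  ultimately show ?thesis by simp
qed

lemma floor_card:
  assumes "x \<ge> 0" "d > 0"
  shows "\<lfloor>x / real d\<rfloor> = int (card {k\<in>{1..nat \<lfloor>x\<rfloor>}. d dvd k})"
proof -
  define N where "N = nat \<lfloor>x\<rfloor>"
  have "\<lfloor>x / real d\<rfloor> = \<lfloor>x / real_of_int (int d)\<rfloor>" by simp
  also have "\<dots> = \<lfloor>x\<rfloor> div int d" by (rule floor_divide_real_eq_div) simp
  also have "\<dots> = int (N div d)" using assms by (simp add: N_def zdiv_int)
  finally have eq1: "\<lfloor>x / real d\<rfloor> = int (N div d)" .
  have "{k\<in>{1..N}. d dvd k} = (\<lambda>j. d * j) ` {1..N div d}"
  proof
    show "(\<lambda>j. d * j) ` {1..N div d} \<subseteq> {k\<in>{1..N}. d dvd k}"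
    proof
      fix k assume "k \<in> (\<lambda>j. d * j) ` {1..N div d}"
      then obtain j where j: "j \<in> {1..N div d}" "k = d * j" by auto
      have "d * j \<le> d * (N div d)" using j by simp
      also have "\<dots> \<le> N" by simp
      finally show "k \<in> {k\<in>{1..N}. d dvd k}" using j assms by auto
    qed
  next
    show "{k\<in>{1..N}. d dvd k} \<subseteq> (\<lambda>j. d * j) ` {1..N div d}"
    proof
      fix k assume k: "k \<in> {k\<in>{1..N}. d dvd k}"
      then obtain j where j: "k = d * j" by auto
      have "j \<ge> 1" using k j by (cases j) auto
      moreover have "j \<le> N div d" using k j assms
        by (metis (no_types, lifting) atLeastAtMost_iff div_le_mono mem_Collect_eq
            nonzero_mult_div_cancel_left not_gr0)
      ultimately show "k \<in> (\<lambda>j. d * j) ` {1..N div d}" using j by auto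
    qed
  qed
  then have "card {k\<in>{1..N}. d dvd k} = N div d"
    using assms by (simp add: card_image inj_on_def)
  then show ?thesis using eq1 using \<open>card {k\<in>{1..N}. d dvd k} = N div d\<close> by (simp add: N_def)
qed

definition Phi :: "nat \<Rightarrow> nat set \<Rightarrow> (nat \<Rightarrow> nat) \<Rightarrow> nat \<Rightarrow> nat" where
  "Phi r P g = (\<lambda>i\<in>{..<r}. \<Prod>{p\<in>P. g p = Suc i})"

definition Tset :: "nat \<Rightarrow> nat \<Rightarrow> nat \<Rightarrow> (nat \<Rightarrow> nat) set" where
  "Tset r N k = {t\<in>{..<r} \<rightarrow>\<^sub>E {1..N}. (\<Prod>i<r. t i) dvd k \<and> squarefree (\<Prod>i<r. t i)}"

lemma Phi_prod:
  assumes "finite P" "g \<in> P \<rightarrow>\<^sub>E {0..r}"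
  shows "(\<Prod>i<r. Phi r P g i) = \<Prod>{p\<in>P. g p \<noteq> 0}"
proof -
  have "(\<Prod>i<r. Phi r P g i) = (\<Prod>i<r. prod id {p\<in>P. g p = Suc i})"
    by (simp add: Phi_def)
  also have "\<dots> = (\<Prod>i\<in>{..<r}. prod id {p. p \<in> {p\<in>P. g p \<noteq> 0} \<and> g p - 1 = i})"
    by (intro prod.cong refl arg_cong[where f="prod id"]) auto
  also have "\<dots> = prod id {p\<in>P. g p \<noteq> 0}"
    using assms by (intro prod.group) (auto simp: PiE_def Pi_def)
  finally show ?thesis by simp
qed

lemma Phi_pf:
  assumes "finite P" "\<forall>p\<in>P. prime p" "i < r"
  shows "prime_factors (Phi r P g i) = {p\<in>P. g p = Suc i}"
  using assms primes_prime_factors[of "{p\<in>P. g p = Suc i}"] by (simp add: Phi_def)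

lemma Phi_bij:
  assumes "k > 0" "k \<le> N"
  shows "bij_betw (Phi r (prime_factors k)) (prime_factors k \<rightarrow>\<^sub>E {0..r}) (Tset r N k)"
proof -
  define P where "P = prime_factors k"
  have fP: "finite P" and pP: "\<forall>p\<in>P. prime p" by (auto simp: P_def)
  show ?thesis unfolding P_def[symmetric]
  proof (rule bij_betw_imageI)
    show "inj_on (Phi r P) (P \<rightarrow>\<^sub>E {0..r})"
    proof (rule inj_onI)
      fix g g' assume g: "g \<in> P \<rightarrow>\<^sub>E {0..r}" and g': "g' \<in> P \<rightarrow>\<^sub>E {0..r}"
        and eq: "Phi r P g = Phi r P g'"
      show "g = g'"
      proof (rule PiE_ext[OF g g'])
        fix p assume p: "p \<in> P"
        have key: "g p = Suc i \<longleftrightarrow> g' p = Suc i" if "i < r" for i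
        proof -
          have "{q\<in>P. g q = Suc i} = {q\<in>P. g' q = Suc i}"
            using Phi_pf[OF fP pP that, of g] Phi_pf[OF fP pP that, of g'] eq by simp
          then show ?thesis using p by blast
        qed
        have "g p \<le> r" "g' p \<le> r" using g g' p by auto
        show "g p = g' p"
        proof (cases "g p")
          case 0
          show ?thesis
          proof (cases "g' p")
            case (Suc j)
            then show ?thesis using key[of j] \<open>g' p \<le> r\<close> 0 by auto
          qed (simp add: 0)
        next
          case (Suc j)
          then show ?thesis using key[of j] \<open>g p \<le> r\<close> by auto
        qed
      qed
    qed
  next
    show "Phi r P ` (P \<rightarrow>\<^sub>E {0..r}) = Tset r N k"
    proof
      show "Phi r P ` (P \<rightarrow>\<^sub>E {0..r}) \<subseteq> Tset r N k"
      proof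
        fix t assume "t \<in> Phi r P ` (P \<rightarrow>\<^sub>E {0..r})"
        then obtain g where g: "g \<in> P \<rightarrow>\<^sub>E {0..r}" and t: "t = Phi r P g" by auto
        have pr: "(\<Prod>i<r. t i) = \<Prod>{p\<in>P. g p \<noteq> 0}" using Phi_prod[OF fP g] t by simp
        have "(\<Prod>i<r. t i) dvd k" unfolding pr
          by (rule primes_dvd) (use fP in \<open>auto simp: P_def\<close>)
        moreover have "squarefree (\<Prod>i<r. t i)" unfolding pr
          by (rule primes_squarefree) (use fP pP in auto)
        moreover have "t \<in> {..<r} \<rightarrow>\<^sub>E {1..N}"
        proof -
          have "t i \<in> {1..N}" if "i < r" for i
          proof -
            have "t i = \<Prod>{p\<in>P. g p = Suc i}" using t that by (simp add: Phi_def)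
            moreover have "\<Prod>{p\<in>P. g p = Suc i} > 0"
              by (rule primes_prod_pos) (use fP pP in auto)
            moreover have "\<Prod>{p\<in>P. g p = Suc i} dvd k"
              by (rule primes_dvd) (use fP in \<open>auto simp: P_def\<close>)
            then have "\<Prod>{p\<in>P. g p = Suc i} \<le> k" using assms by (simp add: dvd_imp_le)
            ultimately show ?thesis using assms by auto
          qed
          then show ?thesis using t by (auto simp: Phi_def)
        qed
        ultimately show "t \<in> Tset r N k" by (simp add: Tset_def)
      qed
    next
      show "Tset r N k \<subseteq> Phi r P ` (P \<rightarrow>\<^sub>E {0..r})"
      proof
        fix t assume tT: "t \<in> Tset r N k"
        then have tE: "t \<in> {..<r} \<rightarrow>\<^sub>E {1..N}" and dk: "(\<Prod>i<r. t i) dvd k"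
          and sq: "squarefree (\<Prod>i<r. t i)" by (auto simp: Tset_def)
        have tpos: "t i > 0" if "i < r" for i
        proof -
          have "t i \<in> {1..N}" using PiE_mem[OF tE, of i] that by simp
          then show ?thesis by simp
        qed
        have tdvd: "t i dvd (\<Prod>i<r. t i)" if "i < r" for i using that by (intro dvd_prodI) auto
        have uniq: "i = j" if "i < r" "j < r" "prime p" "p dvd t i" "p dvd t j" for i j p
        proof (rule ccontr)
          assume ij: "i \<noteq> j"
          have "(\<Prod>l<r. t l) = t i * (\<Prod>l\<in>{..<r}-{i}. t l)"
            using that by (intro prod.remove) auto
          also have "(\<Prod>l\<in>{..<r}-{i}. t l) = t j * (\<Prod>l\<in>{..<r}-{i}-{j}. t l)"
            using that ij by (intro prod.remove) auto
          finally have E: "(\<Prod>l<r. t l) = (t i * t j) * (\<Prod>l\<in>{..<r}-{i}-{j}. t l)"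
            by (simp add: mult.assoc)
          have "p * p dvd t i * t j" using that by (intro mult_dvd_mono)
          then have "p * p dvd (\<Prod>l<r. t l)" unfolding E by (rule dvd_mult2)
          then have "p ^ 2 dvd (\<Prod>l<r. t l)" by (simp add: power2_eq_square)
          then have "is_unit p" using sq squarefreeD by blast
          then show False using \<open>prime p\<close> by auto
        qed
        define g where "g = (\<lambda>p\<in>P. if \<exists>i<r. p dvd t i then Suc (SOME i. i < r \<and> p dvd t i) else 0)"
        have g: "g \<in> P \<rightarrow>\<^sub>E {0..r}"
        proof -
          have "Suc (SOME i. i < r \<and> p dvd t i) \<le> r" if "\<exists>i<r. p dvd t i" for p
            using someI_ex[OF that] by auto
          then show ?thesis by (auto simp: g_def)
        qed
        have "Phi r P g = t"
        proof (rule PiE_ext)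
          show "Phi r P g \<in> {..<r} \<rightarrow>\<^sub>E UNIV" by (simp add: Phi_def)
          show "t \<in> {..<r} \<rightarrow>\<^sub>E UNIV" using tE by auto
          fix i assume i: "i \<in> {..<r}"
          have "{p\<in>P. g p = Suc i} = prime_factors (t i)"
          proof
            show "{p\<in>P. g p = Suc i} \<subseteq> prime_factors (t i)"
            proof
              fix p assume p: "p \<in> {p\<in>P. g p = Suc i}"
              then have ex: "\<exists>j<r. p dvd t j" by (auto simp: g_def split: if_splits)
              have "g p = (if \<exists>i<r. p dvd t i then Suc (SOME i. i < r \<and> p dvd t i) else 0)"
                using p by (simp add: g_def)
              also have "\<dots> = Suc (SOME i. i < r \<and> p dvd t i)" by (rule if_P[OF ex])
              finally have eq: "(SOME j. j < r \<and> p dvd t j) = i" using p by simp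
              have s: "(SOME j. j < r \<and> p dvd t j) < r \<and> p dvd t (SOME j. j < r \<and> p dvd t j)"
                by (rule someI_ex[OF ex])
              then have "p dvd t i" unfolding eq by simp
              then show "p \<in> prime_factors (t i)" using p tpos i
                by (auto simp: P_def prime_factors_dvd)
            qed
          next
            show "prime_factors (t i) \<subseteq> {p\<in>P. g p = Suc i}"
            proof
              fix p assume p: "p \<in> prime_factors (t i)"
              then have pp: "prime p" and pd: "p dvd t i" by auto
              have "p dvd k" using pd tdvd[of i] i dk by (meson dvd_trans lessThan_iff)
              then have pP': "p \<in> P" using pp assms by (auto simp: P_def prime_factors_dvd)
              have ex: "\<exists>j<r. p dvd t j" using i pd by auto
              have s: "(SOME j. j < r \<and> p dvd t j) < r \<and> p dvd t (SOME j. j < r \<and> p dvd t j)"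
                by (rule someI_ex[OF ex])
              have "(SOME j. j < r \<and> p dvd t j) = i"
                using uniq[OF conjunct1[OF s] _ pp conjunct2[OF s] pd] i by simp
              then show "p \<in> {p\<in>P. g p = Suc i}" using pP' ex by (auto simp: g_def)
            qed
          qed
          moreover have "squarefree (t i)" using squarefree_mono[OF tdvd sq] i by auto
          ultimately show "Phi r P g i = t i"
            using squarefree_prod_pf[of "t i"] tpos i by (simp add: Phi_def)
        qed
        then show "t \<in> Phi r P ` (P \<rightarrow>\<^sub>E {0..r})" using g by blast
      qed
    qed
  qed
qed

lemma pointwise:
  assumes "k > 0" "k \<le> N"
  shows "(\<Sum>t\<in>{..<r} \<rightarrow>\<^sub>E {1..N}. if C t \<and> (\<Prod>i<r. t i) dvd k
             then real_of_int (moebius_mu (\<Prod>i<r. t i)) else 0)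
       = (\<Sum>g\<in>prime_factors k \<rightarrow>\<^sub>E {0..r}. if C (Phi r (prime_factors k) g)
             then (\<Prod>p\<in>prime_factors k. (if g p = 0 then 1 else -1 :: real)) else 0)"
proof -
  define P where "P = prime_factors k"
  have fP: "finite P" and pP: "\<forall>p\<in>P. prime p" by (auto simp: P_def)
  have "(\<Sum>t\<in>{..<r} \<rightarrow>\<^sub>E {1..N}. if C t \<and> (\<Prod>i<r. t i) dvd k
             then real_of_int (moebius_mu (\<Prod>i<r. t i)) else 0)
      = (\<Sum>t\<in>Tset r N k. if C t then real_of_int (moebius_mu (\<Prod>i<r. t i)) else 0)"
    by (rule sum.mono_neutral_cong_right) (auto simp: Tset_def moebius_mu_def intro!: finite_PiE)
  also have "\<dots> = (\<Sum>g\<in>P \<rightarrow>\<^sub>E {0..r}. if C (Phi r P g)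
                   then real_of_int (moebius_mu (\<Prod>i<r. Phi r P g i)) else 0)"
    unfolding P_def using sum.reindex_bij_betw[OF Phi_bij[OF assms, of r],
        of "\<lambda>t. if C t then real_of_int (moebius_mu (\<Prod>i<r. t i)) else 0"]
    by simp
  also have "\<dots> = (\<Sum>g\<in>P \<rightarrow>\<^sub>E {0..r}. if C (Phi r P g)
             then (\<Prod>p\<in>P. (if g p = 0 then 1 else -1 :: real)) else 0)"
  proof (rule sum.cong[OF refl])
    fix g assume g: "g \<in> P \<rightarrow>\<^sub>E {0..r}"
    have "moebius_mu (\<Prod>i<r. Phi r P g i) = (-1) ^ card {p\<in>P. g p \<noteq> 0}"
      unfolding Phi_prod[OF fP g] by (rule primes_mu) (use fP pP in auto)
    then show "(if C (Phi r P g) then real_of_int (moebius_mu (\<Prod>i<r. Phi r P g i)) else 0)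
      = (if C (Phi r P g) then (\<Prod>p\<in>P. (if g p = 0 then 1 else -1 :: real)) else 0)"
      using prod_sign[OF fP, of g] by simp
  qed
  finally show ?thesis unfolding P_def .
qed

lemma sum_sign:
  assumes "J \<subseteq> {1..r}"
  shows "(\<Sum>b\<in>{0..r} - J. (if b = (0::nat) then 1 else -1 :: real)) = 1 - real r + real (card J)"
proof -
  have e: "{0..r} - J = insert 0 ({1..r} - J)" using assms by auto
  have fJ: "finite J" using assms finite_subset by blast
  have "(\<Sum>b\<in>{0..r} - J. (if b = (0::nat) then 1 else -1 :: real))
      = 1 + (\<Sum>b\<in>{1..r} - J. (if b = (0::nat) then 1 else -1 :: real))"
    unfolding e by (subst sum.insert) auto
  also have "(\<Sum>b\<in>{1..r} - J. (if b = (0::nat) then 1 else -1 :: real)) = (\<Sum>b\<in>{1..r} - J. -1)"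
    by (rule sum.cong) auto
  also have "\<dots> = - real (card ({1..r} - J))" by simp
  finally have X: "(\<Sum>b\<in>{0..r} - J. (if b = (0::nat) then 1 else -1 :: real)) = 1 - real (card ({1..r} - J))"
    by simp
  have "card ({1..r} - J) = r - card J" using assms fJ by (simp add: card_Diff_subset)
  moreover have "card J \<le> r" using card_mono[OF _ assms] by simp
  ultimately show ?thesis using X by (simp add: of_nat_diff)
qed

lemma full_g:
  assumes "finite P"
  shows "(\<Sum>g\<in>P \<rightarrow>\<^sub>E {0..r}. (\<Prod>p\<in>P. (if g p = (0::nat) then 1 else -1 :: real)))
       = (1 - real r) ^ card P"
  using sum_PiE_prod_const[OF assms, of "{0..r}" "\<lambda>b. if b = 0 then 1 else -1"]
    sum_sign[of "{}" r] by simp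




lemma Phi_inj:
  assumes "finite P" "\<forall>p\<in>P. prime p" "g \<in> P \<rightarrow>\<^sub>E {0..r}"
  shows "inj_on (Phi r P g) {..<r} \<longleftrightarrow> card ({1..r} - g ` P) \<le> 1"
proof -
  define M where "M = {1..r} - g ` P"
  have fM: "finite M" by (simp add: M_def)
  have eqv: "Phi r P g i = Phi r P g j \<longleftrightarrow> {p\<in>P. g p = Suc i} = {p\<in>P. g p = Suc j}"
    if "i < r" "j < r" for i j
  proof
    assume "Phi r P g i = Phi r P g j"
    then have "prime_factors (Phi r P g i) = prime_factors (Phi r P g j)" by simp
    then show "{p\<in>P. g p = Suc i} = {p\<in>P. g p = Suc j}"
      unfolding Phi_pf[OF assms(1,2) that(1), of g] Phi_pf[OF assms(1,2) that(2), of g] .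
  next
    assume "{p\<in>P. g p = Suc i} = {p\<in>P. g p = Suc j}"
    moreover have "Phi r P g i = \<Prod>{p\<in>P. g p = Suc i}" using that(1) by (simp add: Phi_def)
    moreover have "Phi r P g j = \<Prod>{p\<in>P. g p = Suc j}" using that(2) by (simp add: Phi_def)
    ultimately show "Phi r P g i = Phi r P g j" by simp
  qed
  have emp: "{p\<in>P. g p = Suc i} = {} \<longleftrightarrow> Suc i \<in> M" if "i < r" for i
  proof -
    have "Suc i \<in> {1..r}" using that by simp
    then have "Suc i \<in> M \<longleftrightarrow> Suc i \<notin> g ` P" by (simp add: M_def)
    also have "\<dots> \<longleftrightarrow> (\<forall>p\<in>P. g p \<noteq> Suc i)" by (auto simp: image_iff)
    also have "\<dots> \<longleftrightarrow> {p\<in>P. g p = Suc i} = {}" by auto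
    finally show ?thesis by simp
  qed
  have "inj_on (Phi r P g) {..<r} \<longleftrightarrow> (\<forall>a\<in>M. \<forall>b\<in>M. a = b)"
  proof
    assume inj: "inj_on (Phi r P g) {..<r}"
    show "\<forall>a\<in>M. \<forall>b\<in>M. a = b"
    proof (intro ballI)
      fix a b assume a: "a \<in> M" and b: "b \<in> M"
      have a1: "a \<in> {1..r}" and b1: "b \<in> {1..r}" using a b by (simp_all add: M_def)
      obtain i where i: "a = Suc i" "i < r" using a1 by (cases a) auto
      obtain j where j: "b = Suc j" "j < r" using b1 by (cases b) auto
      have ei: "{p\<in>P. g p = Suc i} = {}" using emp[OF i(2)] a i(1) by simp
      have ej: "{p\<in>P. g p = Suc j} = {}" using emp[OF j(2)] b j(1) by simp
      have "{p\<in>P. g p = Suc i} = {p\<in>P. g p = Suc j}" by (simp only: ei ej)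
      then have "Phi r P g i = Phi r P g j" by (rule iffD2[OF eqv[OF i(2) j(2)]])
      then have "i = j" using inj i j by (auto dest: inj_onD)
      then show "a = b" using i j by simp
    qed
  next
    assume H: "\<forall>a\<in>M. \<forall>b\<in>M. a = b"
    show "inj_on (Phi r P g) {..<r}"
    proof (rule inj_onI)
      fix i j assume i: "i \<in> {..<r}" and j: "j \<in> {..<r}" and e: "Phi r P g i = Phi r P g j"
      have S: "{p\<in>P. g p = Suc i} = {p\<in>P. g p = Suc j}" using iffD1[OF eqv e] i j by simp
      show "i = j"
      proof (cases "{p\<in>P. g p = Suc i} = {}")
        case True
        then have "Suc i \<in> M" "Suc j \<in> M" using emp[of i] emp[of j] i j S by simp_all
        then show ?thesis using H by auto
      next
        case False
        then obtain p where "p \<in> P" "g p = Suc i" by auto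
        then show ?thesis using S by auto
      qed
    qed
  qed
  also have "\<dots> \<longleftrightarrow> card M \<le> 1" using card_le_Suc0_iff_eq[OF fM] by simp
  finally show ?thesis by (simp add: M_def)
qed

lemma inj_g:
  assumes fP: "finite P" and pP: "\<forall>p\<in>P. prime p"
  shows "(\<Sum>g\<in>P \<rightarrow>\<^sub>E {0..r}. if inj_on (Phi r P g) {..<r}
            then (\<Prod>p\<in>P. (if g p = 0 then 1 else -1 :: real)) else 0)
       = (\<Sum>j\<le>r. real (r choose j) * ((-1) ^ j * (1 - real j) * (1 - real r + real j) ^ card P))"
proof -
  define w where "w g = (\<Prod>p\<in>P. (if g p = 0 then 1 else -1 :: real))" for g :: "nat \<Rightarrow> nat"
  define c where "c j = (-1) ^ j * (1 - real j)" for j :: nat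
  have "(\<Sum>g\<in>P \<rightarrow>\<^sub>E {0..r}. if inj_on (Phi r P g) {..<r} then w g else 0)
      = (\<Sum>g\<in>P \<rightarrow>\<^sub>E {0..r}. w g * (\<Sum>J\<in>Pow ({1..r} - g ` P). c (card J)))"
  proof (rule sum.cong[OF refl])
    fix g assume g: "g \<in> P \<rightarrow>\<^sub>E {0..r}"
    show "(if inj_on (Phi r P g) {..<r} then w g else 0) = w g * (\<Sum>J\<in>Pow ({1..r} - g ` P). c (card J))"
      using alt_indicator[of "{1..r} - g ` P"] Phi_inj[OF fP pP g] unfolding c_def by simp
  qed
  also have "\<dots> = (\<Sum>g\<in>P \<rightarrow>\<^sub>E {0..r}. \<Sum>J\<in>Pow {1..r}. if J \<inter> g ` P = {} then w g * c (card J) else 0)"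
  proof (rule sum.cong[OF refl])
    fix g
    have e: "Pow ({1..r} - g ` P) = {J \<in> Pow {1..r}. J \<inter> g ` P = {}}" by auto
    have "(\<Sum>J\<in>Pow ({1..r} - g ` P). c (card J)) = (\<Sum>J\<in>Pow {1..r}. if J \<inter> g ` P = {} then c (card J) else 0)"
      unfolding e by (rule sum.inter_filter) simp
    then have "w g * (\<Sum>J\<in>Pow ({1..r} - g ` P). c (card J)) = (\<Sum>J\<in>Pow {1..r}. w g * (if J \<inter> g ` P = {} then c (card J) else 0))"
      by (simp add: sum_distrib_left)
    also have "\<dots> = (\<Sum>J\<in>Pow {1..r}. if J \<inter> g ` P = {} then w g * c (card J) else 0)"
      by (rule sum.cong) auto
    finally show "w g * (\<Sum>J\<in>Pow ({1..r} - g ` P). c (card J)) = (\<Sum>J\<in>Pow {1..r}. if J \<inter> g ` P = {} then w g * c (card J) else 0)" .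
  qed
  also have "\<dots> = (\<Sum>J\<in>Pow {1..r}. \<Sum>g\<in>P \<rightarrow>\<^sub>E {0..r}. if J \<inter> g ` P = {} then w g * c (card J) else 0)"
    by (rule sum.swap)
  also have "\<dots> = (\<Sum>J\<in>Pow {1..r}. c (card J) * (1 - real r + real (card J)) ^ card P)"
  proof (rule sum.cong[OF refl])
    fix J assume J: "J \<in> Pow {1..r}"
    have fin: "finite (P \<rightarrow>\<^sub>E {0..r})" using fP by (simp add: finite_PiE)
    have "(\<Sum>g\<in>P \<rightarrow>\<^sub>E {0..r}. if J \<inter> g ` P = {} then w g * c (card J) else 0)
        = (\<Sum>g\<in>{g\<in>P \<rightarrow>\<^sub>E {0..r}. J \<inter> g ` P = {}}. w g * c (card J))"
      using fin by (simp add: sum.inter_filter)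
    also have "{g\<in>P \<rightarrow>\<^sub>E {0..r}. J \<inter> g ` P = {}} = P \<rightarrow>\<^sub>E ({0..r} - J)"
      by (auto simp: PiE_iff extensional_def)
    also have "(\<Sum>g\<in>P \<rightarrow>\<^sub>E ({0..r} - J). w g * c (card J)) = c (card J) * (\<Sum>g\<in>P \<rightarrow>\<^sub>E ({0..r} - J). w g)"
      by (simp add: sum_distrib_left mult.commute)
    also have "(\<Sum>g\<in>P \<rightarrow>\<^sub>E ({0..r} - J). w g) = (1 - real r + real (card J)) ^ card P"
      unfolding w_def using sum_PiE_prod_const[OF fP, of "{0..r} - J" "\<lambda>b. if b = 0 then 1 else -1"]
        sum_sign[of J r] J by simp
    finally show "(\<Sum>g\<in>P \<rightarrow>\<^sub>E {0..r}. if J \<inter> g ` P = {} then w g * c (card J) else 0)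
        = c (card J) * (1 - real r + real (card J)) ^ card P" .
  qed
  also have "\<dots> = (\<Sum>j\<le>r. real (r choose j) * (c j * (1 - real r + real j) ^ card P))"
    using sum_pow_card[of "{1..r}" "\<lambda>j. c j * (1 - real r + real j) ^ card P"] by simp
  finally show ?thesis unfolding w_def c_def by simp
qed

lemma strict_list:
  assumes "strict_mono_on {..<r} (s :: nat \<Rightarrow> nat)"
  shows "sorted (map s [0..<r]) \<and> distinct (map s [0..<r]) \<and> set (map s [0..<r]) = s ` {..<r}"
proof -
  have "sorted_wrt (<) (map s [0..<r])"
    unfolding sorted_wrt_iff_nth_less using assms by (auto intro: strict_mono_onD)
  then show ?thesis by (auto simp: strict_sorted_iff atLeast0LessThan)
qed

lemma strict_unique:
  assumes "strict_mono_on {..<r} (s :: nat \<Rightarrow> nat)" "strict_mono_on {..<r} s'"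
    "s ` {..<r} = s' ` {..<r}" "i < r"
  shows "s i = s' i"
proof -
  have "map s [0..<r] = map s' [0..<r]"
    using strict_list[OF assms(1)] strict_list[OF assms(2)] assms(3)
    by (intro sorted_distinct_set_unique) auto
  note e = this
  have "s i = map s [0..<r] ! i" using assms(4) by simp
  also have "\<dots> = map s' [0..<r] ! i" by (simp only: e)
  also have "\<dots> = s' i" using assms(4) by simp
  finally show ?thesis .
qed

lemma perm_bij:
  fixes A :: "nat set" and r :: nat
  shows "bij_betw (\<lambda>(s, p). s \<circ> p)
           ({s\<in>{..<r} \<rightarrow>\<^sub>E A. strict_mono_on {..<r} s} \<times> {p. p permutes {..<r}})
           {t\<in>{..<r} \<rightarrow>\<^sub>E A. inj_on t {..<r}}"
proof (rule bij_betw_imageI)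
  show "inj_on (\<lambda>(s, p). s \<circ> p) ({s\<in>{..<r} \<rightarrow>\<^sub>E A. strict_mono_on {..<r} s} \<times> {p. p permutes {..<r}})"
  proof (rule inj_onI, clarify)
    fix s p s' p'
    assume s: "s \<in> {..<r} \<rightarrow>\<^sub>E A" "strict_mono_on {..<r} s" and p: "p permutes {..<r}"
      and s': "s' \<in> {..<r} \<rightarrow>\<^sub>E A" "strict_mono_on {..<r} s'" and p': "p' permutes {..<r}"
      and e: "s \<circ> p = s' \<circ> p'"
    have "(s \<circ> p) ` {..<r} = s ` (p ` {..<r})" by (rule image_comp[symmetric])
    then have "s ` {..<r} = (s \<circ> p) ` {..<r}" using permutes_image[OF p] by simp
    also have "\<dots> = (s' \<circ> p') ` {..<r}" using e by simp
    also have "\<dots> = s' ` (p' ` {..<r})" by (rule image_comp[symmetric])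
    also have "\<dots> = s' ` {..<r}" using permutes_image[OF p'] by simp
    finally have im: "s ` {..<r} = s' ` {..<r}" .
    have ss: "s = s'"
    proof (rule PiE_ext[OF s(1) s'(1)])
      fix i assume "i \<in> {..<r}"
      then show "s i = s' i" using strict_unique[of r s s' i] s(2) s'(2) im by simp
    qed
    have "p = p'"
    proof
      fix i
      show "p i = p' i"
      proof (cases "i < r")
        case True
        have "s (p i) = s (p' i)" using fun_cong[OF e, of i] ss by simp
        moreover have "p i \<in> {..<r}" "p' i \<in> {..<r}"
          using permutes_in_image[OF p] permutes_in_image[OF p'] True by auto
        moreover have "inj_on s {..<r}" using s(2) by (rule strict_mono_on_imp_inj_on)
        ultimately show ?thesis by (auto dest: inj_onD)
      next
        case False
        then show ?thesis using permutes_not_in[OF p] permutes_not_in[OF p'] by auto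
      qed
    qed
    then show "s = s' \<and> p = p'" using ss by simp
  qed
next
  show "(\<lambda>(s, p). s \<circ> p) ` ({s\<in>{..<r} \<rightarrow>\<^sub>E A. strict_mono_on {..<r} s} \<times> {p. p permutes {..<r}})
        = {t\<in>{..<r} \<rightarrow>\<^sub>E A. inj_on t {..<r}}"
  proof
    show "(\<lambda>(s, p). s \<circ> p) ` ({s\<in>{..<r} \<rightarrow>\<^sub>E A. strict_mono_on {..<r} s} \<times> {p. p permutes {..<r}})
        \<subseteq> {t\<in>{..<r} \<rightarrow>\<^sub>E A. inj_on t {..<r}}"
    proof clarify
      fix s p assume s: "s \<in> {..<r} \<rightarrow>\<^sub>E A" "strict_mono_on {..<r} s" and p: "p permutes {..<r}"
      have "s \<circ> p \<in> {..<r} \<rightarrow>\<^sub>E A"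
      proof (rule PiE_I)
        fix i assume "i \<in> {..<r}"
        then have "p i \<in> {..<r}" using permutes_in_image[OF p] by simp
        then show "(s \<circ> p) i \<in> A" using s(1) by auto
      next
        fix i assume "i \<notin> {..<r}"
        then show "(s \<circ> p) i = undefined" using s(1) permutes_not_in[OF p] by auto
      qed
      moreover have "inj_on (s \<circ> p) {..<r}"
      proof (rule comp_inj_on)
        show "inj_on p {..<r}" using permutes_inj_on[OF p] .
        show "inj_on s (p ` {..<r})" using permutes_image[OF p] strict_mono_on_imp_inj_on[OF s(2)] by simp
      qed
      ultimately show "s \<circ> p \<in> {..<r} \<rightarrow>\<^sub>E A \<and> inj_on (s \<circ> p) {..<r}" by simp
    qed
  next
    show "{t\<in>{..<r} \<rightarrow>\<^sub>E A. inj_on t {..<r}} \<subseteq>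
      (\<lambda>(s, p). s \<circ> p) ` ({s\<in>{..<r} \<rightarrow>\<^sub>E A. strict_mono_on {..<r} s} \<times> {p. p permutes {..<r}})"
    proof
      fix t assume "t \<in> {t\<in>{..<r} \<rightarrow>\<^sub>E A. inj_on t {..<r}}"
      then have t: "t \<in> {..<r} \<rightarrow>\<^sub>E A" and it: "inj_on t {..<r}" by blast+
      define xs where "xs = sorted_list_of_set (t ` {..<r})"
      have lxs: "length xs = r" using card_image[OF it] by (simp add: xs_def)
      have sxs: "set xs = t ` {..<r}" by (simp add: xs_def)
      have swxs: "sorted_wrt (<) xs" by (simp add: xs_def)
      define s where "s = (\<lambda>i\<in>{..<r}. xs ! i)"
      have sm: "strict_mono_on {..<r} s"
        by (rule strict_mono_onI) (use swxs lxs in \<open>auto simp: s_def sorted_wrt_iff_nth_less\<close>)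
      have sim: "s ` {..<r} = t ` {..<r}"
      proof -
        have "s ` {..<r} = (\<lambda>i. xs ! i) ` {..<length xs}" using lxs by (auto simp: s_def)
        also have "\<dots> = set xs" by (auto simp: in_set_conv_nth)
        finally show ?thesis using sxs by simp
      qed
      have sE: "s \<in> {..<r} \<rightarrow>\<^sub>E A"
      proof -
        have "t ` {..<r} \<subseteq> A" using t by (auto dest: PiE_mem)
        then have "s ` {..<r} \<subseteq> A" using sim by simp
        then show ?thesis by (auto simp: s_def)
      qed
      have bs: "bij_betw s {..<r} (t ` {..<r})"
        using sim strict_mono_on_imp_inj_on[OF sm] by (simp add: bij_betw_def)
      define p where "p = (\<lambda>i. if i < r then inv_into {..<r} s (t i) else i)"
      have bp: "bij_betw p {..<r} {..<r}"
      proof -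
        have "bij_betw (inv_into {..<r} s \<circ> t) {..<r} {..<r}"
          using bij_betw_trans[OF bij_betw_imageI[OF it refl] bij_betw_inv_into[OF bs]] .
        then show ?thesis by (rule bij_betw_cong[THEN iffD1, rotated]) (auto simp: p_def)
      qed
      have pp: "p permutes {..<r}" by (rule bij_imp_permutes[OF bp]) (auto simp: p_def)
      have "s \<circ> p = t"
      proof
        fix i show "(s \<circ> p) i = t i"
        proof (cases "i < r")
          case True
          have ti: "t i \<in> s ` {..<r}" unfolding sim using True by simp
          have "p i = inv_into {..<r} s (t i)" using True by (simp add: p_def)
          then show ?thesis using f_inv_into_f[OF ti] by simp
        next
          case False
          have "p i = i" using False by (simp add: p_def)
          moreover have "s i = undefined" using False by (simp add: s_def)
          moreover have "t i = undefined" using False by (intro PiE_arb[OF t]) simp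
          ultimately show ?thesis by simp
        qed
      qed
      then show "t \<in> (\<lambda>(s, p). s \<circ> p) ` ({s\<in>{..<r} \<rightarrow>\<^sub>E A. strict_mono_on {..<r} s} \<times> {p. p permutes {..<r}})"
        by (intro image_eqI[where x="(s,p)"]) (use sE sm pp \<open>s \<circ> p = t\<close> in auto)
    qed
  qed
qed

lemma perm_sum:
  fixes F :: "nat \<Rightarrow> real" and A :: "nat set" and r :: nat
  shows "(\<Sum>t\<in>{t\<in>{..<r} \<rightarrow>\<^sub>E A. inj_on t {..<r}}. F (\<Prod>i<r. t i))
       = fact r * (\<Sum>s\<in>{s\<in>{..<r} \<rightarrow>\<^sub>E A. strict_mono_on {..<r} s}. F (\<Prod>i<r. s i))"
proof -
  let ?St = "{s\<in>{..<r} \<rightarrow>\<^sub>E A. strict_mono_on {..<r} s}"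
  let ?Pm = "{p. p permutes {..<r}}"
  have "(\<Sum>t\<in>{t\<in>{..<r} \<rightarrow>\<^sub>E A. inj_on t {..<r}}. F (\<Prod>i<r. t i))
      = (\<Sum>x\<in>?St \<times> ?Pm. F (\<Prod>i<r. ((\<lambda>(s, p). s \<circ> p) x) i))"
    by (rule sum.reindex_bij_betw[OF perm_bij, symmetric])
  also have "\<dots> = (\<Sum>s\<in>?St. \<Sum>p\<in>?Pm. F (\<Prod>i<r. (s \<circ> p) i))"
    by (simp add: sum.cartesian_product case_prod_unfold)
  also have "\<dots> = (\<Sum>s\<in>?St. \<Sum>p\<in>?Pm. F (\<Prod>i<r. s i))"
  proof (intro sum.cong refl)
    fix s :: "nat \<Rightarrow> nat" and p assume "p \<in> ?Pm"
    then have "p permutes {..<r}" by simp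
    then have "(\<Prod>i<r. s i) = (\<Prod>i<r. (s \<circ> p) i)" using prod.permute[of p "{..<r}" s] by simp
    then show "F (\<Prod>i<r. (s \<circ> p) i) = F (\<Prod>i<r. s i)" by simp
  qed
  also have "\<dots> = (\<Sum>s\<in>?St. fact r * F (\<Prod>i<r. s i))"
    using card_permutations[of "{..<r}" r] by simp
  also have "\<dots> = fact r * (\<Sum>s\<in>?St. F (\<Prod>i<r. s i))" by (simp add: sum_distrib_left)
  finally show ?thesis .
qed



lemma swap_lemma:
  fixes r :: nat
  assumes "x \<ge> 1"
  shows "(\<Sum>t\<in>{t\<in>{..<r} \<rightarrow>\<^sub>E {1..nat \<lfloor>x\<rfloor>}. C t}.
            real_of_int (moebius_mu (\<Prod>i<r. t i) * \<lfloor>x / real (\<Prod>i<r. t i)\<rfloor>))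
       = (\<Sum>k=1..nat \<lfloor>x\<rfloor>. \<Sum>t\<in>{..<r} \<rightarrow>\<^sub>E {1..nat \<lfloor>x\<rfloor>}.
            if C t \<and> (\<Prod>i<r. t i) dvd k then real_of_int (moebius_mu (\<Prod>i<r. t i)) else 0)"
proof -
  define N where "N = nat \<lfloor>x\<rfloor>"
  have fin: "finite ({..<r} \<rightarrow>\<^sub>E {1..N})" by (simp add: finite_PiE)
  have "(\<Sum>t\<in>{t\<in>{..<r} \<rightarrow>\<^sub>E {1..N}. C t}.
            real_of_int (moebius_mu (\<Prod>i<r. t i) * \<lfloor>x / real (\<Prod>i<r. t i)\<rfloor>))
      = (\<Sum>t\<in>{..<r} \<rightarrow>\<^sub>E {1..N}. if C t then
            real_of_int (moebius_mu (\<Prod>i<r. t i) * \<lfloor>x / real (\<Prod>i<r. t i)\<rfloor>) else 0)"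
    using fin by (rule sum.inter_filter)
  also have "\<dots> = (\<Sum>t\<in>{..<r} \<rightarrow>\<^sub>E {1..N}. \<Sum>k\<in>{1..N}.
            if C t \<and> (\<Prod>i<r. t i) dvd k then real_of_int (moebius_mu (\<Prod>i<r. t i)) else 0)"
  proof (rule sum.cong[OF refl])
    fix t assume t: "t \<in> {..<r} \<rightarrow>\<^sub>E {1..N}"
    have "(\<Prod>i<r. t i) > 0"
    proof (rule prod_pos)
      fix i assume "i \<in> {..<r}"
      then have "t i \<in> {1..N}" using PiE_mem[OF t] by simp
      then show "t i > 0" by simp
    qed
    then have fl: "\<lfloor>x / real (\<Prod>i<r. t i)\<rfloor> = int (card {k\<in>{1..N}. (\<Prod>i<r. t i) dvd k})"
      using floor_card[of x "\<Prod>i<r. t i"] assms by (simp add: N_def)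
    have cs: "real (card {k\<in>{1..N}. (\<Prod>i<r. t i) dvd k}) = (\<Sum>k\<in>{1..N}. if (\<Prod>i<r. t i) dvd k then 1 else 0)"
      by (simp add: sum.inter_filter[symmetric])
    show "(if C t then real_of_int (moebius_mu (\<Prod>i<r. t i) * \<lfloor>x / real (\<Prod>i<r. t i)\<rfloor>) else 0)
        = (\<Sum>k\<in>{1..N}. if C t \<and> (\<Prod>i<r. t i) dvd k then real_of_int (moebius_mu (\<Prod>i<r. t i)) else 0)"
    proof (cases "C t")
      case True
      then show ?thesis unfolding fl using cs
        by (simp add: sum_distrib_left if_distrib cong: if_cong)
    qed simp
  qed
  also have "\<dots> = (\<Sum>k\<in>{1..N}. \<Sum>t\<in>{..<r} \<rightarrow>\<^sub>E {1..N}.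
            if C t \<and> (\<Prod>i<r. t i) dvd k then real_of_int (moebius_mu (\<Prod>i<r. t i)) else 0)"
    by (rule sum.swap)
  finally show ?thesis by (simp add: N_def)
qed

lemma full_k:
  assumes "k > 0" "k \<le> N"
  shows "(\<Sum>t\<in>{..<r} \<rightarrow>\<^sub>E {1..N}. if True \<and> (\<Prod>i<r. t i) dvd k
             then real_of_int (moebius_mu (\<Prod>i<r. t i)) else 0) = (1 - real r) ^ omega k"
  using pointwise[OF assms, of "\<lambda>_. True" r] full_g[of "prime_factors k" r]
  by (simp add: omega_def)

lemma inj_k:
  assumes "k > 0" "k \<le> N"
  shows "(\<Sum>t\<in>{..<r} \<rightarrow>\<^sub>E {1..N}. if inj_on t {..<r} \<and> (\<Prod>i<r. t i) dvd k
             then real_of_int (moebius_mu (\<Prod>i<r. t i)) else 0)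
       = (\<Sum>j\<le>r. real (r choose j) * ((-1) ^ j * (1 - real j) * (1 - real r + real j) ^ omega k))"
proof -
  have pP: "\<forall>p\<in>prime_factors k. prime p" by auto
  show ?thesis
    using pointwise[OF assms, of "\<lambda>t. inj_on t {..<r}" r] inj_g[OF _ pP, of r]
    by (simp add: omega_def)
qed

lemma omega_zero_sum:
  "(\<Sum>k=1..N. (0::real) ^ omega k) = (if N \<ge> 1 then 1 else 0)"
proof -
  have "(\<Sum>k=1..N. (0::real) ^ omega k) = (\<Sum>k=1..N. if k = 1 then 1 else 0)"
  proof (rule sum.cong[OF refl])
    fix k assume k: "k \<in> {1..N}"
    have "omega k = 0 \<longleftrightarrow> k = 1"
    proof
      assume "omega k = 0"
      then have "prime_factors k = {}" by (simp add: omega_def)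
      then have "prime_factorization k = {#}" by simp
      then show "k = 1" using k prime_factorization_empty_iff[of k] by simp
    qed (simp add: omega_def)
    moreover have "omega 1 = 0" by (simp add: omega_def)
    ultimately show "(0::real) ^ omega k = (if k = 1 then 1 else 0)" by (cases "k = 1") simp_all
  qed
  also have "\<dots> = (if N \<ge> 1 then 1 else 0)" by simp
  finally show ?thesis .
qed

lemma final_alg:
  fixes f s N g0 sg a b :: real
  assumes "f \<noteq> 0" "a \<noteq> 0" "b \<noteq> 0"
  shows "1 / (a * b * f) * (g0 + sg + s * a * (a - 2) + s * (- b) * N)
       = 1 / (a * b * f) * g0 - 1 / (a * b * f) * (- sg)
         - s * N / (a * f) + s * (a - 2) / (b * f)"
  using assms by (simp add: field_simps)

theorem lemma3p6:
  fixes r :: nat and x :: real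
  assumes "r \<ge> 2" and "x \<ge> 1"
  shows "(\<Sum>n \<in> {n \<in> {..<r} \<rightarrow>\<^sub>E {1..nat \<lfloor>x\<rfloor>}. strict_mono_on {..<r} n}.
            real_of_int (moebius_mu (\<Prod>i<r. n i) * \<lfloor>x / real (\<Prod>i<r. n i)\<rfloor>))
       = (1 / fact r) * (\<Sum>n \<in> {..<r} \<rightarrow>\<^sub>E {1..nat \<lfloor>x\<rfloor>}.
            real_of_int (moebius_mu (\<Prod>i<r. n i) * \<lfloor>x / real (\<Prod>i<r. n i)\<rfloor>))
         - (1 / fact r) * (\<Sum>j = 2..r - 2. (-1) ^ j * (real j - 1) * real (r choose j)
              * (\<Sum>m = 1..nat \<lfloor>x\<rfloor>. (1 - real r + real j) ^ omega m))
         - (-1) ^ r * real_of_int \<lfloor>x\<rfloor> / (real r * fact (r - 2))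
         + (-1) ^ r * (real r - 2) / fact (r - 1)"
proof -
  define N where "N = nat \<lfloor>x\<rfloor>"
  have "\<lfloor>x\<rfloor> \<ge> 1" using assms(2) by simp
  then have "nat 1 \<le> nat \<lfloor>x\<rfloor>" by (rule nat_mono)
  then have N1: "N \<ge> 1" by (simp add: N_def)
  have fl: "real_of_int \<lfloor>x\<rfloor> = real N" using assms by (simp add: N_def)
  define F where "F d = real_of_int (moebius_mu d * \<lfloor>x / real d\<rfloor>)" for d
  define E where "E j = (\<Sum>m=1..N. (1 - real r + real j) ^ omega m)" for j
  define G where "G j = real (r choose j) * ((-1) ^ j * (1 - real j) * E j)" for j
  have A: "(\<Sum>n \<in> {n \<in> {..<r} \<rightarrow>\<^sub>E {1..N}. strict_mono_on {..<r} n}. F (\<Prod>i<r. n i))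
      = (1 / fact r) * (\<Sum>t\<in>{t\<in>{..<r} \<rightarrow>\<^sub>E {1..N}. inj_on t {..<r}}. F (\<Prod>i<r. t i))"
    using perm_sum[of F r "{1..N}"] by simp
  have B: "(\<Sum>t\<in>{t\<in>{..<r} \<rightarrow>\<^sub>E {1..N}. inj_on t {..<r}}. F (\<Prod>i<r. t i)) = (\<Sum>j\<le>r. G j)"
  proof -
    have "(\<Sum>t\<in>{t\<in>{..<r} \<rightarrow>\<^sub>E {1..N}. inj_on t {..<r}}. F (\<Prod>i<r. t i))
        = (\<Sum>k=1..N. \<Sum>t\<in>{..<r} \<rightarrow>\<^sub>E {1..N}.
            if inj_on t {..<r} \<and> (\<Prod>i<r. t i) dvd k then real_of_int (moebius_mu (\<Prod>i<r. t i)) else 0)"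
      using swap_lemma[OF assms(2), where C="\<lambda>t. inj_on t {..<r}" and r=r] by (simp add: F_def N_def)
    also have "\<dots> = (\<Sum>k=1..N. \<Sum>j\<le>r. real (r choose j) * ((-1) ^ j * (1 - real j) * (1 - real r + real j) ^ omega k))"
      by (rule sum.cong[OF refl]) (rule inj_k, auto)
    also have "\<dots> = (\<Sum>j\<le>r. \<Sum>k=1..N. real (r choose j) * ((-1) ^ j * (1 - real j) * (1 - real r + real j) ^ omega k))"
      by (rule sum.swap)
    also have "\<dots> = (\<Sum>j\<le>r. G j)"
      by (simp add: G_def E_def sum_distrib_left)
    finally show ?thesis .
  qed
  have C: "(\<Sum>t\<in>{..<r} \<rightarrow>\<^sub>E {1..N}. F (\<Prod>i<r. t i)) = E 0"
  proof -
    have "(\<Sum>t\<in>{..<r} \<rightarrow>\<^sub>E {1..N}. F (\<Prod>i<r. t i))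
        = (\<Sum>k=1..N. \<Sum>t\<in>{..<r} \<rightarrow>\<^sub>E {1..N}.
            if True \<and> (\<Prod>i<r. t i) dvd k then real_of_int (moebius_mu (\<Prod>i<r. t i)) else 0)"
      using swap_lemma[OF assms(2), where C="\<lambda>t. True" and r=r] by (simp add: F_def N_def)
    also have "\<dots> = (\<Sum>k=1..N. (1 - real r) ^ omega k)"
      by (rule sum.cong[OF refl]) (rule full_k, auto)
    finally show ?thesis by (simp add: E_def)
  qed
  obtain m where m: "r = m + 2" using assms(1) by (metis add.commute le_Suc_ex)
  have G1: "G 1 = 0" by (simp add: G_def)
  have split: "(\<Sum>j\<le>r. G j) = G 0 + (\<Sum>j=2..m. G j) + G (m+1) + G (m+2)"
  proof -
    have "(\<Sum>j\<le>r. G j) = (\<Sum>j\<le>m. G j) + G (m+1) + G (m+2)" by (simp add: m)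
    moreover have "(\<Sum>j\<le>m. G j) = G 0 + (\<Sum>j=1..m. G j)"
    proof -
      have "{..m} = insert 0 {1..m}" by auto
      then show ?thesis by simp
    qed
    moreover have "(\<Sum>j=1..m. G j) = (\<Sum>j=2..m. G j)"
    proof (cases "m = 0")
      case False
      then have "{1..m} = insert 1 {2..m}" by auto
      then show ?thesis using G1 by simp
    qed simp
    ultimately show ?thesis by simp
  qed
  have Em1: "E (m+1) = 1"
  proof -
    have "E (m+1) = (\<Sum>k=1..N. (0::real) ^ omega k)" by (simp add: E_def m)
    then show ?thesis using omega_zero_sum[of N] N1 by simp
  qed
  have Em2: "E (m+2) = real N"
  proof -
    have "E (m+2) = (\<Sum>k=1..N. (1::real))" by (simp add: E_def m)
    then show ?thesis by simp
  qed
  have G0: "G 0 = E 0" by (simp add: G_def)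
  have Gm1: "G (m+1) = (-1) ^ m * real (m+2) * (real (m+2) - 2)"
    using Em1 by (simp add: G_def m)
  have Gm2: "G (m+2) = (-1) ^ m * (- real (m+1)) * real N"
    using Em2 by (simp add: G_def m)
  have S: "(\<Sum>j = 2..r - 2. (-1) ^ j * (real j - 1) * real (r choose j)
              * (\<Sum>m = 1..nat \<lfloor>x\<rfloor>. (1 - real r + real j) ^ omega m)) = - (\<Sum>j=2..m. G j)"
    by (simp add: G_def E_def N_def m sum_negf[symmetric] algebra_simps)
  have LHS: "(\<Sum>n \<in> {n \<in> {..<r} \<rightarrow>\<^sub>E {1..nat \<lfloor>x\<rfloor>}. strict_mono_on {..<r} n}.
            real_of_int (moebius_mu (\<Prod>i<r. n i) * \<lfloor>x / real (\<Prod>i<r. n i)\<rfloor>))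
      = (1 / fact r) * (G 0 + (\<Sum>j=2..m. G j) + G (m+1) + G (m+2))"
    using A B split by (simp add: F_def N_def)
  have RHS1: "(\<Sum>n \<in> {..<r} \<rightarrow>\<^sub>E {1..nat \<lfloor>x\<rfloor>}.
            real_of_int (moebius_mu (\<Prod>i<r. n i) * \<lfloor>x / real (\<Prod>i<r. n i)\<rfloor>)) = G 0"
    using C G0 by (simp add: F_def N_def)
  have fr: "(fact r :: real) = real (m+2) * real (m+1) * fact m" by (simp add: m)
  have fr1: "(fact (r - 1) :: real) = real (m+1) * fact m" by (simp add: m)
  have fr2: "(fact (r - 2) :: real) = fact m" by (simp add: m)
  have sg: "(-1::real) ^ r = (-1) ^ m" by (simp add: m)
  have rr: "real r = real (m+2)" by (simp add: m)
  have fp: "(fact m :: real) > 0" by simp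
  show ?thesis
    unfolding LHS RHS1 S unfolding fl Gm1 Gm2 fr fr1 fr2 sg rr
    by (rule final_alg) simp_all
qed

end
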